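(* Let $0<\alpha<1$ and let $\varphi$ be a function on $[0,1]$ with $\varphi(s)\ge 0$ for $0\le s\le 1$ (such that the integrals below exist). Define $$s_{n}=\frac{1}{\Gamma(1-\alpha)}\int_{0}^{1}(n+1-s)^{-\alpha}\varphi(s)\,\mathrm{d}s,\qquad n\ge 0.$$ Then for every $k\in\mathbb{N}$ and every $n\ge k$, $(-1)^{k}\nabla^{k}s_{n}\ge 0$.
   Context: Backward differences: $\nabla^{0}s_{n}=s_{n}$ and $\nabla^{k}s_{n}=\nabla^{k-1}s_{n}-\nabla^{k-1}s_{n-1}$ for $k\ge 1$. *)

theory Defs
  imports "HOL-Analysis.Analysis"
begin

fun bdiff :: "nat \<Rightarrow> (nat \<Rightarrow> real) \<Rightarrow> nat \<Rightarrow> real" where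
  "bdiff 0 s n = s n"
| "bdiff (Suc k) s n = bdiff k s n - bdiff k s (n - 1)"

end

theory Submission
  imports Defs
begin

lemma bdiff_diff: "bdiff k (\<lambda>m. s m - t m) n = bdiff k s n - bdiff k t n"
  by (induction k arbitrary: n) auto

lemma bdiff_scale: "bdiff k (\<lambda>m. c * t m) n = c * bdiff k t n"
  by (induction k arbitrary: n) (auto simp: algebra_simps)

lemma bdiff_shift: "bdiff k (\<lambda>m. s (m - 1)) n = bdiff k s (n - 1)"
  by (induction k arbitrary: n) auto

lemma bdiff_local:
  "(\<And>m. n - k \<le> m \<Longrightarrow> m \<le> n \<Longrightarrow> s m = t m) \<Longrightarrow> bdiff k s n = bdiff k t n"
proof (induction k arbitrary: n)
  case 0 then show ?case by simp
next
  case (Suc k)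
  have "bdiff k s n = bdiff k t n" by (rule Suc.IH) (use Suc.prems in auto)
  moreover have "bdiff k s (n-1) = bdiff k t (n-1)" by (rule Suc.IH) (use Suc.prems in auto)
  ultimately show ?case by simp
qed

lemma bdiff_integral:
  assumes "\<And>m. set_integrable M A (F m)"
  shows "set_integrable M A (\<lambda>x. bdiff k (\<lambda>m. F m x) n) \<and>
         (LINT x:A|M. bdiff k (\<lambda>m. F m x) n) = bdiff k (\<lambda>m. LINT x:A|M. F m x) n"
proof (induction k arbitrary: n)
  case 0 then show ?case using assms by simp
next
  case (Suc k)
  from Suc.IH[of n] Suc.IH[of "n-1"] show ?case by simp
qed

lemma bdiff_cm:
  fixes D :: "nat \<Rightarrow> real \<Rightarrow> real"
  assumes "\<And>j t. t > a \<Longrightarrow> (D j has_real_derivative D (Suc j) t) (at t)"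
    and "\<And>j t. t > a \<Longrightarrow> (-1) ^ j * D j t \<ge> 0"
    and "k \<le> n" and "real n - real k > a"
  shows "(-1) ^ k * bdiff k (\<lambda>m. D 0 (real m)) n \<ge> 0"
  using assms
proof (induction k arbitrary: D a n)
  case 0
  then show ?case using 0(2)[of "real n" 0] by simp
next
  case (Suc k)
  define E where "E j t = D j (t - 1) - D j t" for j t
  have dE: "(E j has_real_derivative E (Suc j) t) (at t)" if "t > a + 1" for j t
  proof -
    have "((\<lambda>t. D j (t - 1)) has_real_derivative D (Suc j) (t - 1)) (at t)"
    proof -
      have h: "(D j has_real_derivative D (Suc j) (t - 1)) (at (t - 1))"
        using Suc.prems(1)[of "t-1" j] that by simp
      have h2: "((\<lambda>t. t - 1) has_real_derivative 1) (at t)"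
        by (auto intro!: derivative_eq_intros)
      show ?thesis using DERIV_chain2[where f="D j" and g="\<lambda>t. t - 1", OF h h2] by simp
    qed
    then show ?thesis unfolding E_def
      using Suc.prems(1)[of t j] that by (auto intro!: derivative_eq_intros)
  qed
  have sE: "(-1) ^ j * E j t \<ge> 0" if "t > a + 1" for j t
  proof -
    have d: "\<And>x. t - 1 \<le> x \<Longrightarrow> x \<le> t \<Longrightarrow> (D j has_real_derivative D (Suc j) x) (at x)"
      using Suc.prems(1) that by auto
    obtain z where z: "z > t - 1" "z < t"
      "D j t - D j (t-1) = (t - (t-1)) * D (Suc j) z"
      using MVT2[of "t-1" t "D j" "D (Suc j)", OF _ d] by auto
    have "E j t = - D (Suc j) z" using z unfolding E_def by simp
    then have "(-1) ^ j * E j t = (-1) ^ Suc j * D (Suc j) z" by simp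
    also have "\<dots> \<ge> 0" using Suc.prems(2)[of z "Suc j"] z that by simp
    finally show ?thesis .
  qed
  have IH: "(-1) ^ k * bdiff k (\<lambda>m. E 0 (real m)) n \<ge> 0"
    using Suc.IH[of "a+1" E n] dE sE Suc.prems(3,4) by auto
  have "bdiff k (\<lambda>m. E 0 (real m)) n = bdiff k (\<lambda>m. D 0 (real (m - 1)) - D 0 (real m)) n"
    by (rule bdiff_local) (use Suc.prems(3) in \<open>auto simp: E_def of_nat_diff\<close>)
  also have "\<dots> = bdiff k (\<lambda>m. D 0 (real m)) (n - 1) - bdiff k (\<lambda>m. D 0 (real m)) n"
    using bdiff_shift[of k "\<lambda>m. D 0 (real m)" n] by (simp add: bdiff_diff)
  finally have "(-1) ^ Suc k * bdiff (Suc k) (\<lambda>m. D 0 (real m)) n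
      = (-1) ^ k * bdiff k (\<lambda>m. E 0 (real m)) n" by (simp add: algebra_simps) (metis distrib_left)
  then show ?case using IH by simp
qed

theorem lemma2p5:
  fixes \<alpha> :: real and \<phi> :: "real \<Rightarrow> real" and s :: "nat \<Rightarrow> real"
  assumes "0 < \<alpha>" and "\<alpha> < 1"
    and "\<And>x. 0 \<le> x \<Longrightarrow> x \<le> 1 \<Longrightarrow> \<phi> x \<ge> 0"
    and "\<And>n. set_integrable lborel {0..1} (\<lambda>x. (real n + 1 - x) powr (-\<alpha>) * \<phi> x)"
    and "\<And>n. s n = (1 / Gamma (1 - \<alpha>)) *
                 (LINT x:{0..1}|lborel. (real n + 1 - x) powr (-\<alpha>) * \<phi> x)"
    and "k \<le> n"
  shows "(-1) ^ k * bdiff k s n \<ge> 0"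
proof -
  define g where "g m x = (real m + 1 - x) powr (-\<alpha>)" for m x
  define c where "c = 1 / Gamma (1 - \<alpha>)"
  have c: "c > 0" unfolding c_def using assms(2) by simp
  have s: "s = (\<lambda>m. c * (LINT x:{0..1}|lborel. g m x * \<phi> x))"
    using assms(5) unfolding c_def g_def by auto
  note BI = bdiff_integral[of lborel "{0..1}" "\<lambda>m x. g m x * \<phi> x", OF assms(4)[unfolded g_def[symmetric]]]
  have eq: "bdiff k (\<lambda>m. g m x * \<phi> x) n = \<phi> x * bdiff k (\<lambda>m. g m x) n" for x
    using bdiff_scale[of k "\<phi> x" "\<lambda>m. g m x" n] by (simp add: mult.commute)
  have "bdiff k s n = c * bdiff k (\<lambda>m. LINT x:{0..1}|lborel. g m x * \<phi> x) n"
    unfolding s by (rule bdiff_scale)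
  also have "\<dots> = c * (LINT x:{0..1}|lborel. \<phi> x * bdiff k (\<lambda>m. g m x) n)"
    using BI[of k n] eq by simp
  finally have 1: "(-1) ^ k * bdiff k s n
      = c * ((-1) ^ k * (LINT x:{0..1}|lborel. \<phi> x * bdiff k (\<lambda>m. g m x) n))" by simp
  have 2: "(-1) ^ k * (LINT x:{0..1}|lborel. \<phi> x * bdiff k (\<lambda>m. g m x) n)
      = (LINT x:{0..1}|lborel. \<phi> x * ((-1) ^ k * bdiff k (\<lambda>m. g m x) n))"
    by (subst set_integral_mult_right[symmetric]) (simp add: mult.left_commute)
  have pt: "(-1) ^ k * bdiff k (\<lambda>m. g m x) n \<ge> 0" if "0 \<le> x" "x < 1" for x
  proof -
    define D where "D j t = (-1) ^ j * pochhammer \<alpha> j * (t + 1 - x) powr (-\<alpha> - real j)" for j t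
    have "(-1) ^ k * bdiff k (\<lambda>m. D 0 (real m)) n \<ge> 0"
    proof (rule bdiff_cm[where a = "x - 1"])
      fix j and t :: real assume t: "t > x - 1"
      show "(D j has_real_derivative D (Suc j) t) (at t)"
        unfolding D_def using t
        apply (auto intro!: derivative_eq_intros simp: pochhammer_Suc)
        apply (simp add: algebra_simps)
        done
    next
      fix j and t :: real assume t: "t > x - 1"
      have m: "(-1::real) ^ j * (-1) ^ j = 1" by (simp flip: power_mult_distrib)
      have "(-1) ^ j * D j t = pochhammer \<alpha> j * (t + 1 - x) powr (-\<alpha> - real j)"
        unfolding D_def using m by (simp add: mult.assoc[symmetric])
      also have "\<dots> \<ge> 0" using assms(1) by (simp add: pochhammer_nonneg)
      finally show "(-1) ^ j * D j t \<ge> 0" .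
    qed (use assms(6) that in auto)
    moreover have "D 0 = (\<lambda>t. (t + 1 - x) powr (-\<alpha>))" by (auto simp: D_def)
    ultimately show ?thesis unfolding g_def by simp
  qed
  have "(LINT x:{0..1}|lborel. \<phi> x * ((-1) ^ k * bdiff k (\<lambda>m. g m x) n)) \<ge> 0"
    unfolding set_lebesgue_integral_def
  proof (rule integral_nonneg_AE)
    show "AE x in lborel. 0 \<le> indicator {0..1} x *\<^sub>R (\<phi> x * ((-1) ^ k * bdiff k (\<lambda>m. g m x) n))"
      using AE_lborel_singleton[of "1::real"]
    proof eventually_elim
      case (elim x)
      then show ?case using pt[of x] assms(3)[of x]
        by (auto simp: indicator_def)
    qed
  qed
  then show ?thesis using 1 2 c by simp
qed

end
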